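(* Let $A\in\mathbb{C}^{n\times n}$, and let $\mathcal{H}(A)=\tfrac12(A+A^{*})$ and $\mathcal{S}(A)=\tfrac12(A-A^{*})$. Then \[|\Lambda(A)|\leq \min\Big\{\big(\operatorname{rank}(\mathcal{H}(A))+1\big)\,|\Lambda(\mathcal{S}(A))|,\ \big(\operatorname{rank}(\mathcal{S}(A))+1\big)\,|\Lambda(\mathcal{H}(A))|\Big\}-d(A).\]
   Context: For $M\in\mathbb{C}^{n\times n}$, $\Lambda(M)$ denotes the set of distinct eigenvalues of $M$ and $|\cdot|$ the cardinality of a set; $A^{*}$ is the conjugate transpose. For $\lambda\in\Lambda(M)$, $m_a(M,\lambda)$ is its algebraic multiplicity and $m_g(M,\lambda)$ its geometric multiplicity. The defectivity of $M$ is $d(M):=\sum_{\lambda\in\Lambda(M)}\big(m_a(M,\lambda)-m_g(M,\lambda)\big)$. *)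

theory Defs
  imports "Jordan_Normal_Form.Jordan_Normal_Form_Uniqueness" "Jordan_Normal_Form.Schur_Decomposition"
    "Jordan_Normal_Form.DL_Rank"
begin

definition eigvals :: "complex mat \<Rightarrow> complex set" where
  "eigvals M = {z. eigenvalue M z}"

definition alg_mult :: "complex mat \<Rightarrow> complex \<Rightarrow> nat" where
  "alg_mult M z = Polynomial.order z (char_poly M)"

definition geo_mult :: "complex mat \<Rightarrow> complex \<Rightarrow> nat" where
  "geo_mult M z = kernel_dim (M - z \<cdot>\<^sub>m 1\<^sub>m (dim_row M))"

definition defectivity :: "complex mat \<Rightarrow> nat" where
  "defectivity M = (\<Sum>z\<in>eigvals M. alg_mult M z - geo_mult M z)"

definition herm_part :: "complex mat \<Rightarrow> complex mat" where
  "herm_part A = (1/2) \<cdot>\<^sub>m (A + mat_adjoint A)"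

definition skew_part :: "complex mat \<Rightarrow> complex mat" where
  "skew_part A = (1/2) \<cdot>\<^sub>m (A - mat_adjoint A)"

definition mrank :: "complex mat \<Rightarrow> nat" where
  "mrank M = vec_space.rank (dim_row M) M"

end

theory Submission
  imports Defs "Jordan_Normal_Form.Jordan_Normal_Form_Existence"
begin
lemma rank_nullity_mat:
  fixes X :: "'a::field mat" assumes X: "X \<in> carrier_mat n n"
  shows "kernel_dim X + vec_space.rank n X = n"
proof -
  interpret V: vec_space "TYPE('a)" n .
  interpret K: kernel n n X by (unfold_locales, rule X)
  have hom: "(\<lambda>v. X *\<^sub>v v) \<in> module_hom class_ring V.V V.V"
    unfolding module_hom_def using X
    by (auto simp: mult_add_distrib_mat_vec mult_mat_vec)
  interpret L: linear_map class_ring V.V V.V "\<lambda>v. X *\<^sub>v v"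
    by (intro linear_map.intro mod_hom.intro mod_hom_axioms.intro hom;
        unfold_locales)
  have ker: "L.kerT = mat_kernel X"
    unfolding mod_hom.ker_def[OF L.mod_hom_axioms] mat_kernel_def using X by auto
  have im: "L.imT = V.span (set (cols X))"
    using V.col_space_eq[OF X] X
    unfolding mod_hom.im_def[OF L.mod_hom_axioms] V.col_space_def by auto
  have "vectorspace.dim class_ring (V.vs L.imT) + vectorspace.dim class_ring (V.vs L.kerT) = V.dim"
    by (rule L.rank_nullity) simp
  then show ?thesis unfolding ker im V.rank_def K.kernel_dim V.dim_is_n by simp
qed


lemma order_lin_prod: "Polynomial.order x (\<Prod>a\<leftarrow>as. [:- a, 1:]) = count_list as (x::'a::idom)"
proof (induct as)
  case Nil then show ?case by simp
next
  case (Cons a as)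
  have nz: "[:- a, 1:] * (\<Prod>a\<leftarrow>as. [:- a, 1:]) \<noteq> 0"
    by (rule no_zero_divisors) (auto simp: prod_list_zero_iff)
  show ?case using order_mult[OF nz, of x] Cons order_linear'[of x "-a"] by auto
qed

lemma sum_count_list: "finite A \<Longrightarrow> set xs \<subseteq> A \<Longrightarrow> (\<Sum>x\<in>A. count_list xs x) = length xs"
proof (induct xs)
  case Nil then show ?case by simp
next
  case (Cons a xs)
  have "(\<Sum>x\<in>A. count_list (a # xs) x) = (\<Sum>x\<in>A. (if x = a then 1 else 0) + count_list xs x)"
    by (rule sum.cong) auto
  also have "\<dots> = (\<Sum>x\<in>A. (if x = a then 1 else 0)) + (\<Sum>x\<in>A. count_list xs x)"
    by (rule sum.distrib)
  also have "(\<Sum>x\<in>A. (if x = a then 1 else (0::nat))) = 1" using Cons(2,3) by (simp add: sum.delta')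
  finally show ?case using Cons by simp
qed

lemma eigvals_alg:
  assumes A: "A \<in> carrier_mat n n"
  shows "finite (eigvals A)" "(\<Sum>x\<in>eigvals A. alg_mult A x) = n"
    "eigenvalue A x \<longleftrightarrow> alg_mult A x \<ge> 1"
proof -
  obtain as where cp: "char_poly A = (\<Prod>a\<leftarrow>as. [:- a, 1:])" and len: "length as = n"
    using char_poly_factorized[OF A] by blast
  have nz: "char_poly A \<noteq> 0" unfolding cp by (auto simp: prod_list_zero_iff)
  have alg: "alg_mult A x = count_list as x" for x
    unfolding alg_mult_def cp order_lin_prod ..
  have cnt: "0 < count_list as x \<longleftrightarrow> x \<in> set as" for x by (induct as) auto
  have ev: "eigenvalue A x \<longleftrightarrow> alg_mult A x \<ge> 1" for x
    unfolding eigenvalue_root_char_poly[OF A] using order_root[of "char_poly A" x] nz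
    unfolding alg_mult_def by auto
  then show "eigenvalue A x \<longleftrightarrow> alg_mult A x \<ge> 1" .
  have E: "eigvals A = set as" unfolding eigvals_def using ev
    by (auto simp: alg cnt Suc_le_eq)
  show "finite (eigvals A)" unfolding E by simp
  show "(\<Sum>x\<in>eigvals A. alg_mult A x) = n" unfolding E alg
    using sum_count_list[of "set as" as] len by simp
qed

lemma kernel_dim_perturb:
  fixes N M :: "'a::field mat" assumes N: "N \<in> carrier_mat n n" and M: "M \<in> carrier_mat n n"
  shows "kernel_dim N \<le> kernel_dim (N + M) + vec_space.rank n M"
proof -
  interpret V: vec_space "TYPE('a::field)" n .
  have "V.rank (N + M) \<le> V.rank N + V.rank M" by (rule V.rank_subadditive[OF N M])
  moreover have "kernel_dim N + V.rank N = n" by (rule rank_nullity_mat[OF N])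
  moreover have "kernel_dim (N + M) + V.rank (N + M) = n" by (rule rank_nullity_mat) (use N M in auto)
  ultimately show ?thesis by linarith
qed


lemma sl1: "sum_list (map (\<lambda>n. min 1 n) (ys::nat list)) \<le> sum_list ys"
  by (induct ys) auto
lemma sl2: "sum_list (ys::nat list) \<ge> 1 \<Longrightarrow> sum_list (map (\<lambda>n. min 1 n) ys) \<ge> 1"
  by (induct ys) (auto simp: min_def split: if_splits)
lemma sl3: "sum_list (map (\<lambda>n. min 1 n) (ys::nat list)) \<le> sum_list (map (\<lambda>n. min 2 n) ys)"
  by (induct ys) auto
lemma sl4: "sum_list (map (\<lambda>n. min 2 n) (ys::nat list)) = sum_list (map (\<lambda>n. min 1 n) ys) \<Longrightarrow>
   sum_list (map (\<lambda>n. min 1 n) ys) = sum_list ys"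
proof (induct ys)
  case (Cons y ys)
  have "min 1 y \<le> min 2 y" by auto
  with Cons(2) sl3[of ys] have "min 2 y = min 1 y" 
    "sum_list (map (\<lambda>n. min 2 n) ys) = sum_list (map (\<lambda>n. min 1 n) ys)" by auto
  with Cons(1) show ?case by (auto simp: min_def split: if_splits)
qed simp

lemma kernel_dim_cong:
  fixes M1 M2 :: "'a::field mat"
  assumes "M1 \<in> carrier_mat n n" "M2 \<in> carrier_mat n n" "mat_kernel M1 = mat_kernel M2"
  shows "kernel_dim M1 = kernel_dim M2"
proof -
  interpret K1: kernel n n M1 by (unfold_locales, rule assms(1))
  interpret K2: kernel n n M2 by (unfold_locales, rule assms(2))
  show ?thesis unfolding K1.kernel_dim K2.kernel_dim assms(3) ..
qed

lemma geo_char_matrix: assumes A: "A \<in> carrier_mat n n"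
  shows "geo_mult A x = kernel_dim (char_matrix A x)"
proof -
  have "A - x \<cdot>\<^sub>m 1\<^sub>m (dim_row A) = char_matrix A x"
    unfolding char_matrix_def using A by (intro eq_matI) auto
  then show ?thesis unfolding geo_mult_def by simp
qed

lemma jnf_facts:
  fixes A :: "complex mat"
  assumes A: "A \<in> carrier_mat n n"
  shows "geo_mult A x \<le> alg_mult A x"
    "alg_mult A x \<ge> 1 \<Longrightarrow> geo_mult A x \<ge> 1"
    "mat_kernel (char_matrix A x * char_matrix A x) = mat_kernel (char_matrix A x) \<Longrightarrow> geo_mult A x = alg_mult A x"
proof -
  obtain as where cp: "char_poly A = (\<Prod>a\<leftarrow>as. [:- a, 1:])"
    using char_poly_factorized[OF A] by blast
  from jordan_nf_exists[OF A cp] obtain n_as where jnf: "jordan_nf A n_as" ..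
  define ys where "ys = map fst (filter (\<lambda>na. snd na = x) n_as)"
  have fl: "[(n, e)\<leftarrow>n_as . e = x] = filter (\<lambda>na. snd na = x) n_as"
    by (rule filter_cong) auto
  have CM: "char_matrix A x \<in> carrier_mat n n" using A by simp
  have p1: "char_matrix A x ^\<^sub>m 1 = char_matrix A x" using CM by simp
  have p2: "char_matrix A x ^\<^sub>m 2 = char_matrix A x * char_matrix A x" using CM 
    by (simp add: numeral_2_eq_2)
  have geo: "geo_mult A x = sum_list (map (\<lambda>n. min 1 n) ys)"
    unfolding geo_char_matrix[OF A] using dim_gen_eigenspace[OF jnf, of x 1]
    unfolding dim_gen_eigenspace_def p1 fl ys_def by simp
  have alg: "alg_mult A x = sum_list ys"
    unfolding alg_mult_def jordan_nf_order[OF jnf] ys_def ..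
  show "geo_mult A x \<le> alg_mult A x" unfolding geo alg by (rule sl1)
  show "alg_mult A x \<ge> 1 \<Longrightarrow> geo_mult A x \<ge> 1" unfolding geo alg by (rule sl2)
  assume ker: "mat_kernel (char_matrix A x * char_matrix A x) = mat_kernel (char_matrix A x)"
  have "dim_gen_eigenspace A x 2 = dim_gen_eigenspace A x 1"
    unfolding dim_gen_eigenspace_def p1 p2
    by (rule kernel_dim_cong[OF _ CM ker]) (use CM in auto)
  then have "sum_list (map (\<lambda>n. min 2 n) ys) = sum_list (map (\<lambda>n. min 1 n) ys)"
    unfolding dim_gen_eigenspace[OF jnf] fl ys_def by simp
  then show "geo_mult A x = alg_mult A x" unfolding geo alg by (rule sl4)
qed


lemma smult_mat_mult_vec': "A \<in> carrier_mat n m \<Longrightarrow> u \<in> carrier_vec m \<Longrightarrow> (k \<cdot>\<^sub>m A) *\<^sub>v u = k \<cdot>\<^sub>v (A *\<^sub>v (u :: 'a :: comm_ring vec))"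
  by (intro eq_vecI) (auto simp: scalar_prod_def sum_distrib_left ac_simps)

lemma semisimple_kernel:
  fixes B :: "complex mat" and c \<mu> :: complex
  assumes B: "B \<in> carrier_mat n n"
  and adj: "\<And>x y. x \<in> carrier_vec n \<Longrightarrow> y \<in> carrier_vec n \<Longrightarrow> (B *\<^sub>v x) \<bullet>c y = c * (x \<bullet>c (B *\<^sub>v y))"
  shows "mat_kernel (char_matrix B \<mu> * char_matrix B \<mu>) = mat_kernel (char_matrix B \<mu>)"
proof -
  let ?N = "char_matrix B \<mu>"
  have N: "?N \<in> carrier_mat n n" using B by simp
  have Nv: "?N *\<^sub>v u = B *\<^sub>v u + (-\<mu>) \<cdot>\<^sub>v u" if u: "u \<in> carrier_vec n" for u
    unfolding char_matrix_def using B u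
    by (simp add: add_mult_distrib_mat_vec[of _ n n] smult_mat_mult_vec'[of _ n n])
  have ladd: "(a + b) \<bullet>c y = a \<bullet>c y + b \<bullet>c y" if "a \<in> carrier_vec n" "b \<in> carrier_vec n" "y \<in> carrier_vec n" for a b y
    using that by (simp add: add_scalar_prod_distrib[of _ n])
  have lsm: "(a \<cdot>\<^sub>v x) \<bullet>c y = a * (x \<bullet>c y)" if "x \<in> carrier_vec n" "y \<in> carrier_vec n" for a x y
    using that by (simp add: smult_scalar_prod_distrib[of _ n])
  have rsm: "x \<bullet>c (a \<cdot>\<^sub>v y) = cnj a * (x \<bullet>c y)" if "x \<in> carrier_vec n" "y \<in> carrier_vec n" for a x y
    using that by (simp add: conjugate_smult_vec scalar_prod_smult_distrib[of _ n])
  have key: "?N *\<^sub>v v = 0\<^sub>v n" if v: "v \<in> carrier_vec n" and vv: "?N *\<^sub>v (?N *\<^sub>v v) = 0\<^sub>v n" for v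
  proof -
    define w where "w = ?N *\<^sub>v v"
    have w: "w \<in> carrier_vec n" unfolding w_def using N v by simp
    have Bv: "B *\<^sub>v v \<in> carrier_vec n" using B v by simp
    have Bw: "B *\<^sub>v w \<in> carrier_vec n" using B w by simp
    have h: "B *\<^sub>v w + (-\<mu>) \<cdot>\<^sub>v w = 0\<^sub>v n" using vv Nv[OF w] unfolding w_def by simp
    have Bw_eq: "B *\<^sub>v w = \<mu> \<cdot>\<^sub>v w"
    proof (rule eq_vecI)
      fix i assume i: "i < dim_vec (\<mu> \<cdot>\<^sub>v w)"
      from arg_cong[OF h, of "\<lambda>x. x $ i"] i w Bw show "(B *\<^sub>v w) $ i = (\<mu> \<cdot>\<^sub>v w) $ i" by simp
    qed (use B w in simp)
    have e1: "\<mu> * (w \<bullet>c w) = c * (cnj \<mu> * (w \<bullet>c w))"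
      using adj[OF w w] unfolding Bw_eq lsm[OF w w] rsm[OF w w] .
    have "w \<bullet>c w = (B *\<^sub>v v + (-\<mu>) \<cdot>\<^sub>v v) \<bullet>c w" unfolding w_def using Nv[OF v] by simp
    also have "\<dots> = (B *\<^sub>v v) \<bullet>c w + (-\<mu>) * (v \<bullet>c w)" using ladd[OF Bv _ w] lsm[OF v w] v by simp
    also have "(B *\<^sub>v v) \<bullet>c w = c * (cnj \<mu> * (v \<bullet>c w))" using adj[OF v w] unfolding Bw_eq rsm[OF v w] .
    finally have e2: "w \<bullet>c w = (c * cnj \<mu> - \<mu>) * (v \<bullet>c w)" by (simp add: algebra_simps)
    have "w \<bullet>c w = 0"
    proof (rule ccontr)
      assume ne: "w \<bullet>c w \<noteq> 0"
      from e1 have "(\<mu> - c * cnj \<mu>) * (w \<bullet>c w) = 0" by (simp add: algebra_simps)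
      with ne have "c * cnj \<mu> - \<mu> = 0" by simp
      with e2 ne show False by simp
    qed
    then have "w = 0\<^sub>v n" using w by simp
    then show ?thesis unfolding w_def .
  qed
  have zN: "?N *\<^sub>v 0\<^sub>v n = 0\<^sub>v n" by (rule eq_vecI) (use N in auto)
  show ?thesis
  proof (rule equalityI; rule subsetI)
    fix v assume "v \<in> mat_kernel (?N * ?N)"
    then have v: "v \<in> carrier_vec n" and "(?N * ?N) *\<^sub>v v = 0\<^sub>v n" using mat_kernelD[of "?N * ?N" n n v] N by auto
    then have "?N *\<^sub>v (?N *\<^sub>v v) = 0\<^sub>v n" using N by (simp add: assoc_mult_mat_vec[of _ n n _ n])
    from key[OF v this] show "v \<in> mat_kernel ?N" using v N by (intro mat_kernelI) auto
  next
    fix v assume "v \<in> mat_kernel ?N"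
    then have v: "v \<in> carrier_vec n" and "?N *\<^sub>v v = 0\<^sub>v n" using mat_kernelD[of "?N" n n v] N by auto
    then have "(?N * ?N) *\<^sub>v v = 0\<^sub>v n" using N by (simp add: assoc_mult_mat_vec[of _ n n _ n] zN)
    then show "v \<in> mat_kernel (?N * ?N)" using v N by (intro mat_kernelI) auto
  qed
qed


lemma main_bound:
  fixes A B E :: "complex mat"
  assumes B: "B \<in> carrier_mat n n" and E: "E \<in> carrier_mat n n" and AE: "A = B + E"
  and ss: "\<And>\<mu>. geo_mult B \<mu> = alg_mult B \<mu>"
  shows "card (eigvals A) + defectivity A \<le> (mrank E + 1) * card (eigvals B)"
proof -
  have A: "A \<in> carrier_mat n n" using B E AE by simp
  define r where "r = mrank E"
  have r: "r = vec_space.rank n E" unfolding r_def mrank_def using E by simp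
  define k where "k = card (eigvals B)"
  define LA where "LA = eigvals A"
  define LB where "LB = eigvals B"
  define T where "T = LA \<inter> LB"
  define U where "U = LA - LB"
  have fA: "finite LA" unfolding LA_def by (rule eigvals_alg(1)[OF A])
  have fB: "finite LB" unfolding LB_def by (rule eigvals_alg(1)[OF B])
  have fT: "finite T" "finite U" unfolding T_def U_def using fA by auto
  have geo_le: "geo_mult B \<mu> \<le> geo_mult A \<mu> + r" for \<mu>
  proof -
    have "char_matrix A \<mu> = char_matrix B \<mu> + E"
      unfolding char_matrix_def AE using B E by (intro eq_matI) auto
    then show ?thesis unfolding geo_char_matrix[OF A] geo_char_matrix[OF B] r
      using kernel_dim_perturb[of "char_matrix B \<mu>" n E] B E by simp
  qed
  have "n = (\<Sum>\<mu>\<in>LB. geo_mult B \<mu>)" unfolding ss LB_def eigvals_alg(2)[OF B] ..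
  also have "\<dots> \<le> (\<Sum>\<mu>\<in>LB. geo_mult A \<mu> + r)" by (rule sum_mono) (rule geo_le)
  also have "\<dots> = (\<Sum>\<mu>\<in>LB. geo_mult A \<mu>) + k * r" unfolding k_def LB_def by (simp add: sum.distrib)
  also have "(\<Sum>\<mu>\<in>LB. geo_mult A \<mu>) = (\<Sum>\<mu>\<in>T. geo_mult A \<mu>)"
  proof (rule sum.mono_neutral_right[OF fB])
    show "T \<subseteq> LB" unfolding T_def by auto
    show "\<forall>i\<in>LB - T. geo_mult A i = 0"
    proof
      fix i assume "i \<in> LB - T"
      then have "\<not> eigenvalue A i" unfolding T_def LA_def eigvals_def by auto
      then have "alg_mult A i = 0" using eigvals_alg(3)[OF A, of i] by simp
      then show "geo_mult A i = 0" using jnf_facts(1)[OF A, of i] by simp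
    qed
  qed
  finally have n_le: "n \<le> (\<Sum>\<mu>\<in>T. geo_mult A \<mu>) + k * r" .
  have geoalg: "geo_mult A \<mu> \<le> alg_mult A \<mu>" for \<mu> by (rule jnf_facts(1)[OF A])
  have geo1: "\<mu> \<in> LA \<Longrightarrow> geo_mult A \<mu> \<ge> 1" for \<mu>
    using jnf_facts(2)[OF A] eigvals_alg(3)[OF A] unfolding LA_def eigvals_def by auto
  have "int (defectivity A) = (\<Sum>\<mu>\<in>LA. int (alg_mult A \<mu>) - int (geo_mult A \<mu>))"
    unfolding defectivity_def LA_def of_nat_sum using geoalg by (intro sum.cong) (auto simp: of_nat_diff)
  also have "\<dots> = int n - (\<Sum>\<mu>\<in>LA. int (geo_mult A \<mu>))"
    unfolding sum_subtractf using eigvals_alg(2)[OF A] unfolding LA_def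
    by (metis of_nat_sum)
  finally have d: "int (defectivity A) = int n - (\<Sum>\<mu>\<in>LA. int (geo_mult A \<mu>))" .
  have LATU: "LA = T \<union> U" "T \<inter> U = {}" unfolding T_def U_def by auto
  have sumLA: "(\<Sum>\<mu>\<in>LA. int (geo_mult A \<mu>)) = (\<Sum>\<mu>\<in>T. int (geo_mult A \<mu>)) + (\<Sum>\<mu>\<in>U. int (geo_mult A \<mu>))"
    unfolding LATU(1) by (rule sum.union_disjoint[OF fT LATU(2)])
  have "int (card U) = (\<Sum>\<mu>\<in>U. 1)" by simp
  also have "\<dots> \<le> (\<Sum>\<mu>\<in>U. int (geo_mult A \<mu>))"
    by (rule sum_mono) (use geo1 in \<open>auto simp: U_def\<close>)
  finally have cU: "int (card U) \<le> (\<Sum>\<mu>\<in>U. int (geo_mult A \<mu>))" .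
  have cLA: "card LA = card T + card U" unfolding LATU(1) by (rule card_Un_disjoint[OF fT LATU(2)])
  have cT: "card T \<le> k" unfolding k_def T_def LB_def[symmetric] by (rule card_mono[OF fB]) auto
  have n_le': "int n \<le> (\<Sum>\<mu>\<in>T. int (geo_mult A \<mu>)) + int k * int r"
  proof -
    have "int n \<le> int ((\<Sum>\<mu>\<in>T. geo_mult A \<mu>) + k * r)" using n_le by linarith
    then show ?thesis by (simp add: of_nat_sum)
  qed
  have "int (card LA) + int (defectivity A) \<le> int k + int k * int r"
    unfolding d sumLA cLA using cU cT n_le' by simp
  then have "card LA + defectivity A \<le> k + k * r"
    by (simp only: of_nat_add[symmetric] of_nat_mult[symmetric] of_nat_le_iff)
  then show ?thesis unfolding LA_def k_def r_def by (simp add: algebra_simps)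
qed


lemma adj_index: assumes A: "A \<in> carrier_mat n n"
  shows "mat_adjoint A \<in> carrier_mat n n" "i < n \<Longrightarrow> j < n \<Longrightarrow> mat_adjoint A $$ (i,j) = cnj (A $$ (j,i))"
  using A unfolding mat_adjoint_def by (auto simp: mat_of_rows_def)

lemma adj_identity:
  fixes B :: "complex mat"
  assumes B: "B \<in> carrier_mat n n" and c: "cnj c = c"
  and ent: "\<And>i j. i < n \<Longrightarrow> j < n \<Longrightarrow> B $$ (i,j) = c * cnj (B $$ (j,i))"
  and x: "x \<in> carrier_vec n" and y: "y \<in> carrier_vec n"
  shows "(B *\<^sub>v x) \<bullet>c y = c * (x \<bullet>c (B *\<^sub>v y))"
proof -
  have "(B *\<^sub>v x) \<bullet>c y = (\<Sum>i<n. (\<Sum>j<n. B $$ (i,j) * x $ j) * cnj (y $ i))"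
    unfolding scalar_prod_def using B x y 
    apply (simp add: lessThan_atLeast0)
    apply (intro sum.cong refl)
    apply (simp add: scalar_prod_def row_def lessThan_atLeast0)
    done
  also have "\<dots> = (\<Sum>i<n. \<Sum>j<n. c * (x $ j * (cnj (B $$ (j,i)) * cnj (y $ i))))"
    unfolding sum_distrib_right
  proof (rule sum.cong[OF refl], rule sum.cong[OF refl])
    fix i j assume "i \<in> {..<n}" "j \<in> {..<n}"
    then have h: "B $$ (i,j) = c * cnj (B $$ (j,i))" by (intro ent) auto
    show "B $$ (i,j) * x $ j * cnj (y $ i) = c * (x $ j * (cnj (B $$ (j,i)) * cnj (y $ i)))"
      by (subst h) (simp add: ac_simps)
  qed
  also have "\<dots> = (\<Sum>j<n. \<Sum>i<n. c * (x $ j * (cnj (B $$ (j,i)) * cnj (y $ i))))"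
    by (rule sum.swap)
  also have "\<dots> = c * (\<Sum>j<n. x $ j * cnj (\<Sum>i<n. B $$ (j,i) * y $ i))"
    by (simp add: sum_distrib_left cnj_sum)
  also have "(\<Sum>j<n. x $ j * cnj (\<Sum>i<n. B $$ (j,i) * y $ i)) = x \<bullet>c (B *\<^sub>v y)"
    unfolding scalar_prod_def using B x y 
    apply (simp add: lessThan_atLeast0)
    apply (intro sum.cong refl)
    apply (simp add: scalar_prod_def row_def lessThan_atLeast0)
    done
  finally show ?thesis .
qed

theorem corollary4p4:
  fixes A :: "complex mat" and n :: nat
  assumes "A \<in> carrier_mat n n"
  shows "int (card (eigvals A)) \<le>
    int (min ((mrank (herm_part A) + 1) * card (eigvals (skew_part A)))
             ((mrank (skew_part A) + 1) * card (eigvals (herm_part A))))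
    - int (defectivity A)"
proof -
  note A = assms
  note AD = adj_index[OF A]
  define H where "H = herm_part A"
  define S where "S = skew_part A"
  have H: "H \<in> carrier_mat n n" unfolding H_def herm_part_def using A AD by simp
  have S: "S \<in> carrier_mat n n" unfolding S_def skew_part_def using A AD(1) by (intro smult_carrier_mat minus_carrier_mat)
  have Hi: "H $$ (i,j) = (A $$ (i,j) + cnj (A $$ (j,i))) / 2" if "i < n" "j < n" for i j
    unfolding H_def herm_part_def using A AD that by simp
  have Si: "S $$ (i,j) = (A $$ (i,j) - cnj (A $$ (j,i))) / 2" if "i < n" "j < n" for i j
    unfolding S_def skew_part_def using A AD that by simp
  have A1: "A = S + H" using A H S by (intro eq_matI) (auto simp: Hi Si field_simps)
  have A2: "A = H + S" using A H S by (intro eq_matI) (auto simp: Hi Si field_simps)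
  have entH: "H $$ (i,j) = 1 * cnj (H $$ (j,i))" if "i < n" "j < n" for i j
    using that by (simp add: Hi field_simps)
  have entS: "S $$ (i,j) = (-1) * cnj (S $$ (j,i))" if "i < n" "j < n" for i j
    using that by (simp add: Si field_simps)
  have ssH: "geo_mult H \<mu> = alg_mult H \<mu>" for \<mu>
    by (rule jnf_facts(3)[OF H], rule semisimple_kernel[OF H, of 1])
       (rule adj_identity[OF H _ entH]; simp)
  have ssS: "geo_mult S \<mu> = alg_mult S \<mu>" for \<mu>
    by (rule jnf_facts(3)[OF S], rule semisimple_kernel[OF S, of "-1"])
       (rule adj_identity[OF S _ entS]; simp)
  have b1: "card (eigvals A) + defectivity A \<le> (mrank H + 1) * card (eigvals S)"
    by (rule main_bound[OF S H A1 ssS])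
  have b2: "card (eigvals A) + defectivity A \<le> (mrank S + 1) * card (eigvals H)"
    by (rule main_bound[OF H S A2 ssH])
  have "card (eigvals A) + defectivity A \<le> min ((mrank H + 1) * card (eigvals S)) ((mrank S + 1) * card (eigvals H))"
    using b1 b2 by simp
  then show ?thesis unfolding H_def S_def by linarith
qed

end
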